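(* Let $K\subseteq\mathbb{R}^n$ be non-empty and closed. If $s=(s_\alpha)_{\alpha\in\mathbb{N}_0^n}$ is a $K^\sharp$-moment sequence, then $D(s)$ is a $K$-positivity preserver.
   Context: $D(s):=\sum_\alpha\frac{s_\alpha}{\alpha!}\partial^\alpha$ on $\mathbb{R}[x_1,\dots,x_n]$. $T$ is a $K$-positivity preserver if it maps polynomials non-negative on $K$ to polynomials non-negative on $K$. $K^\sharp:=\{x\in\mathbb{R}^n: x+K\subseteq K\}$. For closed $L$, $s$ is an $L$-moment sequence if $s_\alpha=\int x^\alpha\,\mathrm{d}\mu$ for all $\alpha$ for some measure $\mu$ with $\mathrm{supp}\,\mu\subseteq L$. *)

theory Defs
  imports "HOL-Analysis.Analysis"
begin

text \<open>Polynomials in n variables (n = CARD('n)) with real coefficients are represented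
by their coefficient functions on multi-indices \<alpha> :: 'n \<Rightarrow> nat with finite support.\<close>

definition monom_eval :: "('n::finite \<Rightarrow> nat) \<Rightarrow> real^'n \<Rightarrow> real" where
  "monom_eval \<alpha> x = (\<Prod>i\<in>UNIV. (x $ i) ^ (\<alpha> i))"

definition is_mpoly :: "(('n::finite \<Rightarrow> nat) \<Rightarrow> real) \<Rightarrow> bool" where
  "is_mpoly c \<longleftrightarrow> finite {\<alpha>. c \<alpha> \<noteq> 0}"

definition mpoly_eval :: "(('n::finite \<Rightarrow> nat) \<Rightarrow> real) \<Rightarrow> real^'n \<Rightarrow> real" where
  "mpoly_eval c x = (\<Sum>\<alpha>\<in>{\<alpha>. c \<alpha> \<noteq> 0}. c \<alpha> * monom_eval \<alpha> x)"

definition mfact :: "('n::finite \<Rightarrow> nat) \<Rightarrow> real" where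
  "mfact \<alpha> = (\<Prod>i\<in>UNIV. fact (\<alpha> i))"

text \<open>Partial derivative \<partial>^\<alpha> on coefficient functions:
  \<partial>^\<alpha> x^\<gamma> = \<gamma>!/(\<gamma>-\<alpha>)! x^(\<gamma>-\<alpha>) if \<alpha> \<le> \<gamma>, and 0 otherwise.\<close>
definition mpoly_deriv :: "('n::finite \<Rightarrow> nat) \<Rightarrow> (('n \<Rightarrow> nat) \<Rightarrow> real) \<Rightarrow> (('n \<Rightarrow> nat) \<Rightarrow> real)" where
  "mpoly_deriv \<alpha> c = (\<lambda>\<beta>. c (\<lambda>i. \<beta> i + \<alpha> i) * (\<Prod>i\<in>UNIV. fact (\<beta> i + \<alpha> i) / fact (\<beta> i)))"

text \<open>D(s) = \<Sum>_\<alpha> s_\<alpha>/\<alpha>! \<partial>^\<alpha>; on a polynomial only finitely many terms are nonzero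
  at each coefficient \<beta> (namely those with c(\<beta>+\<alpha>) \<noteq> 0).\<close>
definition Dop :: "(('n::finite \<Rightarrow> nat) \<Rightarrow> real) \<Rightarrow> (('n \<Rightarrow> nat) \<Rightarrow> real) \<Rightarrow> (('n \<Rightarrow> nat) \<Rightarrow> real)" where
  "Dop s c = (\<lambda>\<beta>. \<Sum>\<alpha>\<in>{\<alpha>. c (\<lambda>i. \<beta> i + \<alpha> i) \<noteq> 0}. s \<alpha> / mfact \<alpha> * mpoly_deriv \<alpha> c \<beta>)"

definition pos_preserver :: "(real^'n::finite) set \<Rightarrow> ((('n \<Rightarrow> nat) \<Rightarrow> real) \<Rightarrow> (('n \<Rightarrow> nat) \<Rightarrow> real)) \<Rightarrow> bool" where
  "pos_preserver K T \<longleftrightarrow>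
     (\<forall>c. is_mpoly c \<longrightarrow> (\<forall>x\<in>K. mpoly_eval c x \<ge> 0) \<longrightarrow> (\<forall>x\<in>K. mpoly_eval (T c) x \<ge> 0))"

definition sharp :: "(real^'n::finite) set \<Rightarrow> (real^'n) set" where
  "sharp K = {x. \<forall>k\<in>K. x + k \<in> K}"

definition measure_support :: "(real^'n::finite) measure \<Rightarrow> (real^'n) set" where
  "measure_support \<mu> = {x. \<forall>e>0. emeasure \<mu> (ball x e) > 0}"

definition is_moment_seq :: "(real^'n::finite) set \<Rightarrow> (('n \<Rightarrow> nat) \<Rightarrow> real) \<Rightarrow> bool" where
  "is_moment_seq L s \<longleftrightarrow>
     (\<exists>\<mu>. sets \<mu> = sets borel \<and> measure_support \<mu> \<subseteq> L \<and>
          (\<forall>\<alpha>. integrable \<mu> (monom_eval \<alpha>) \<and> s \<alpha> = integral\<^sup>L \<mu> (monom_eval \<alpha>)))"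

end

theory Submission
  imports Defs
begin

definition Le :: "('n::finite \<Rightarrow> nat) \<Rightarrow> ('n \<Rightarrow> nat) set" where
  "Le \<gamma> = {\<beta>. \<forall>i. \<beta> i \<le> \<gamma> i}"

lemma finite_Le: "finite (Le (\<gamma>::'n::finite \<Rightarrow> nat))"
proof -
  have "Le \<gamma> = PiE UNIV (\<lambda>i. {..\<gamma> i})"
    by (auto simp: Le_def PiE_def Pi_def extensional_def)
  then show ?thesis by (simp add: finite_PiE)
qed

lemma binom_expand:
  fixes x y :: "real^'n::finite"
  shows "monom_eval \<gamma> (x + y) =
    (\<Sum>\<beta>\<in>Le \<gamma>. (\<Prod>i\<in>UNIV. real (\<gamma> i choose \<beta> i)) * monom_eval \<beta> x * monom_eval (\<lambda>i. \<gamma> i - \<beta> i) y)"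
proof -
  have "monom_eval \<gamma> (x + y) = (\<Prod>i\<in>UNIV. \<Sum>k\<in>{..\<gamma> i}. real (\<gamma> i choose k) * (x$i)^k * (y$i)^(\<gamma> i - k))"
    unfolding monom_eval_def by (simp add: binomial_ring)
  also have "\<dots> = (\<Sum>g\<in>PiE UNIV (\<lambda>i. {..\<gamma> i}). \<Prod>i\<in>UNIV. real (\<gamma> i choose g i) * (x$i)^(g i) * (y$i)^(\<gamma> i - g i))"
    by (rule prod_sum_PiE) auto
  also have "PiE UNIV (\<lambda>i. {..\<gamma> i}) = Le \<gamma>"
    by (auto simp: Le_def PiE_def Pi_def extensional_def)
  finally show ?thesis
    unfolding monom_eval_def by (simp add: prod.distrib)
qed

lemma support_ae:
  fixes \<mu> :: "(real^'n::finite) measure"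
  assumes "sets \<mu> = sets borel"
  shows "AE y in \<mu>. y \<in> measure_support \<mu>"
proof -
  define F where "F = {ball x e | x e. e > 0 \<and> emeasure \<mu> (ball x e) = 0}"
  have "\<And>S. S \<in> F \<Longrightarrow> open S" unfolding F_def by auto
  then obtain F' where F': "F' \<subseteq> F" "countable F'" "\<Union>F' = \<Union>F" by (rule Lindelof)
  have "(\<Union>S\<in>F'. S) \<in> null_sets \<mu>"
  proof (rule null_sets_UN')
    show "countable F'" by fact
    fix S assume "S \<in> F'"
    then have "S \<in> F" using F' by auto
    then show "S \<in> null_sets \<mu>" unfolding F_def using assms by auto
  qed
  then have N: "\<Union>F \<in> null_sets \<mu>" using F'(3) by simp
  have ae: "AE y in \<mu>. y \<notin> \<Union>F" by (rule AE_not_in[OF N])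
  have sup: "y \<in> measure_support \<mu>" if yF: "y \<notin> \<Union>F" for y
    unfolding measure_support_def
  proof (intro CollectI allI impI)
    fix e :: real assume e: "e > 0"
    show "0 < emeasure \<mu> (ball y e)"
    proof (rule ccontr)
      assume "\<not> 0 < emeasure \<mu> (ball y e)"
      then have "emeasure \<mu> (ball y e) = 0" by (simp add: not_gr_zero)
      then have "ball y e \<in> F" unfolding F_def using e by blast
      moreover have "y \<in> ball y e" using e by simp
      ultimately show False using yF by blast
    qed
  qed
  show ?thesis using ae by (rule AE_mp) (intro AE_I2 impI sup)
qed

theorem lemma4p10:
  fixes K :: "(real^'n::finite) set" and s :: "('n \<Rightarrow> nat) \<Rightarrow> real"
  assumes "K \<noteq> {}" and "closed K"
    and "is_moment_seq (sharp K) s"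
  shows "pos_preserver K (Dop s)"
  unfolding pos_preserver_def
proof (intro allI impI ballI)
  fix c :: "('n \<Rightarrow> nat) \<Rightarrow> real" and x
  assume cp: "is_mpoly c" and nn: "\<forall>x\<in>K. 0 \<le> mpoly_eval c x" and xK: "x \<in> K"
  obtain \<mu> where mu: "sets \<mu> = sets borel" "measure_support \<mu> \<subseteq> sharp K"
    "\<And>\<alpha>. integrable \<mu> (monom_eval \<alpha>)" "\<And>\<alpha>. s \<alpha> = integral\<^sup>L \<mu> (monom_eval \<alpha>)"
    using assms(3) unfolding is_moment_seq_def by blast
  define S where "S = {\<gamma>. c \<gamma> \<noteq> 0}"
  have finS: "finite S" using cp unfolding S_def is_mpoly_def .
  define A where "A = (\<Union>\<gamma>\<in>S. Le \<gamma>)"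
  have finA: "finite A" unfolding A_def using finS finite_Le by blast
  define ad :: "('n \<Rightarrow> nat) \<Rightarrow> ('n \<Rightarrow> nat) \<Rightarrow> ('n \<Rightarrow> nat)" where "ad = (\<lambda>\<beta> \<alpha> i. \<beta> i + \<alpha> i)"
  define C where "C = (\<lambda>\<beta> \<alpha>. (\<Prod>i\<in>UNIV. real (ad \<beta> \<alpha> i choose \<beta> i)))"
  define T where "T = (\<lambda>y \<beta> \<alpha>. c (ad \<beta> \<alpha>) * C \<beta> \<alpha> * monom_eval \<beta> x * monom_eval \<alpha> y)"
  have inA1: "\<beta> \<in> A" if "c (ad \<beta> \<alpha>) \<noteq> 0" for \<beta> \<alpha>
    using that unfolding A_def S_def Le_def ad_def by force
  have inA2: "\<alpha> \<in> A" if "c (ad \<beta> \<alpha>) \<noteq> 0" for \<beta> \<alpha>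
    using that unfolding A_def S_def Le_def ad_def by force
  have coef: "s \<alpha> / mfact \<alpha> * mpoly_deriv \<alpha> c \<beta> = s \<alpha> * c (ad \<beta> \<alpha>) * C \<beta> \<alpha>" for \<alpha> \<beta>
  proof -
    have "(\<Prod>i\<in>UNIV. fact (\<beta> i + \<alpha> i) / fact (\<beta> i)) / mfact \<alpha>
        = (\<Prod>i\<in>UNIV. fact (\<beta> i + \<alpha> i) / fact (\<beta> i) / fact (\<alpha> i) :: real)"
      unfolding mfact_def by (simp add: prod_dividef prod.distrib)
    also have "\<dots> = C \<beta> \<alpha>"
      unfolding C_def ad_def
      by (rule prod.cong) (simp_all add: binomial_fact divide_divide_eq_left)
    finally have h: "(\<Prod>i\<in>UNIV. fact (\<beta> i + \<alpha> i) / fact (\<beta> i)) / mfact \<alpha> = C \<beta> \<alpha>" .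
    have "s \<alpha> / mfact \<alpha> * mpoly_deriv \<alpha> c \<beta>
        = s \<alpha> * c (ad \<beta> \<alpha>) * ((\<Prod>i\<in>UNIV. fact (\<beta> i + \<alpha> i) / fact (\<beta> i)) / mfact \<alpha>)"
      unfolding mpoly_deriv_def ad_def by simp
    then show ?thesis using h by simp
  qed
  have Dop_eq: "Dop s c \<beta> = (\<Sum>\<alpha>\<in>A. s \<alpha> * c (ad \<beta> \<alpha>) * C \<beta> \<alpha>)" for \<beta>
  proof -
    have "Dop s c \<beta> = (\<Sum>\<alpha>\<in>A. s \<alpha> / mfact \<alpha> * mpoly_deriv \<alpha> c \<beta>)"
      unfolding Dop_def
      apply (rule sum.mono_neutral_left[OF finA])
      using inA2 apply (auto simp: ad_def)[1]
      apply (auto simp: mpoly_deriv_def ad_def)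
      done
    then show ?thesis by (simp only: coef)
  qed
  have Dop0: "\<beta> \<in> A" if "Dop s c \<beta> \<noteq> 0" for \<beta>
  proof -
    have "\<exists>\<alpha>. c (ad \<beta> \<alpha>) \<noteq> 0"
    proof (rule ccontr)
      assume "\<not> (\<exists>\<alpha>. c (ad \<beta> \<alpha>) \<noteq> 0)"
      then have "{\<alpha>. c (\<lambda>i. \<beta> i + \<alpha> i) \<noteq> 0} = {}" by (auto simp: ad_def)
      then have "Dop s c \<beta> = 0" unfolding Dop_def by (simp only: sum.empty)
      then show False using that by simp
    qed
    then obtain \<alpha> where "c (ad \<beta> \<alpha>) \<noteq> 0" by blast
    then show ?thesis by (rule inA1)
  qed
  have sub1: "{\<beta>. Dop s c \<beta> \<noteq> 0} \<subseteq> A" using Dop0 by blast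
  have "mpoly_eval (Dop s c) x = (\<Sum>\<beta>\<in>A. Dop s c \<beta> * monom_eval \<beta> x)"
    unfolding mpoly_eval_def
    by (rule sum.mono_neutral_left[OF finA sub1]) simp
  also have "\<dots> = (\<Sum>\<beta>\<in>A. \<Sum>\<alpha>\<in>A. integral\<^sup>L \<mu> (\<lambda>y. T y \<beta> \<alpha>))"
  proof (rule sum.cong[OF refl])
    fix \<beta>
    have "Dop s c \<beta> * monom_eval \<beta> x = (\<Sum>\<alpha>\<in>A. s \<alpha> * c (ad \<beta> \<alpha>) * C \<beta> \<alpha> * monom_eval \<beta> x)"
      by (simp only: Dop_eq sum_distrib_right)
    also have "\<dots> = (\<Sum>\<alpha>\<in>A. integral\<^sup>L \<mu> (\<lambda>y. T y \<beta> \<alpha>))"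
    proof (rule sum.cong[OF refl])
      fix \<alpha>
      have "integral\<^sup>L \<mu> (\<lambda>y. T y \<beta> \<alpha>) = c (ad \<beta> \<alpha>) * C \<beta> \<alpha> * monom_eval \<beta> x * integral\<^sup>L \<mu> (monom_eval \<alpha>)"
        unfolding T_def by (rule integral_mult_right_zero)
      also have "\<dots> = s \<alpha> * c (ad \<beta> \<alpha>) * C \<beta> \<alpha> * monom_eval \<beta> x"
        by (simp only: mu(4)[symmetric] mult_ac)
      finally show "s \<alpha> * c (ad \<beta> \<alpha>) * C \<beta> \<alpha> * monom_eval \<beta> x = integral\<^sup>L \<mu> (\<lambda>y. T y \<beta> \<alpha>)" by simp
    qed
    finally show "Dop s c \<beta> * monom_eval \<beta> x = (\<Sum>\<alpha>\<in>A. integral\<^sup>L \<mu> (\<lambda>y. T y \<beta> \<alpha>))" .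
  qed
  also have "\<dots> = integral\<^sup>L \<mu> (\<lambda>y. \<Sum>\<beta>\<in>A. \<Sum>\<alpha>\<in>A. T y \<beta> \<alpha>)"
  proof -
    have int: "integrable \<mu> (\<lambda>y. T y \<beta> \<alpha>)" for \<beta> \<alpha>
      unfolding T_def by (rule integrable_mult_right) (rule mu(3))
    have "integral\<^sup>L \<mu> (\<lambda>y. \<Sum>\<beta>\<in>A. \<Sum>\<alpha>\<in>A. T y \<beta> \<alpha>) = (\<Sum>\<beta>\<in>A. integral\<^sup>L \<mu> (\<lambda>y. \<Sum>\<alpha>\<in>A. T y \<beta> \<alpha>))"
      by (simp add: int)
    also have "\<dots> = (\<Sum>\<beta>\<in>A. \<Sum>\<alpha>\<in>A. integral\<^sup>L \<mu> (\<lambda>y. T y \<beta> \<alpha>))"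
      by (simp add: int)
    finally show ?thesis by simp
  qed
  finally have eq1: "mpoly_eval (Dop s c) x = integral\<^sup>L \<mu> (\<lambda>y. \<Sum>\<beta>\<in>A. \<Sum>\<alpha>\<in>A. T y \<beta> \<alpha>)" .
  have eq2: "(\<Sum>\<beta>\<in>A. \<Sum>\<alpha>\<in>A. T y \<beta> \<alpha>) = mpoly_eval c (x + y)" for y
  proof -
    have "mpoly_eval c (x + y) = (\<Sum>\<gamma>\<in>S. c \<gamma> * monom_eval \<gamma> (x + y))"
      unfolding mpoly_eval_def S_def ..
    also have "\<dots> = (\<Sum>\<gamma>\<in>S. \<Sum>\<beta>\<in>Le \<gamma>. c \<gamma> * ((\<Prod>i\<in>UNIV. real (\<gamma> i choose \<beta> i)) * monom_eval \<beta> x * monom_eval (\<lambda>i. \<gamma> i - \<beta> i) y))"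
      by (simp add: binom_expand sum_distrib_left)
    also have "\<dots> = (\<Sum>(\<gamma>,\<beta>)\<in>Sigma S Le. c \<gamma> * ((\<Prod>i\<in>UNIV. real (\<gamma> i choose \<beta> i)) * monom_eval \<beta> x * monom_eval (\<lambda>i. \<gamma> i - \<beta> i) y))"
      by (rule sum.Sigma[OF finS]) (simp add: finite_Le)
    also have "\<dots> = (\<Sum>(\<beta>,\<alpha>)\<in>{(\<beta>,\<alpha>). \<beta> \<in> A \<and> \<alpha> \<in> A \<and> ad \<beta> \<alpha> \<in> S}. T y \<beta> \<alpha>)"
    proof (rule sum.reindex_bij_witness[where i = "\<lambda>(\<beta>,\<alpha>). (ad \<beta> \<alpha>, \<beta>)" and j = "\<lambda>(\<gamma>,\<beta>). (\<beta>, \<lambda>i. \<gamma> i - \<beta> i)"])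
      fix a assume "a \<in> Sigma S Le"
      then obtain \<gamma> \<beta> where a: "a = (\<gamma>, \<beta>)" "\<gamma> \<in> S" "\<beta> \<in> Le \<gamma>" by auto
      have e: "ad \<beta> (\<lambda>i. \<gamma> i - \<beta> i) = \<gamma>" using a(3) unfolding ad_def Le_def by auto
      show "(case case a of (\<gamma>, \<beta>) \<Rightarrow> (\<beta>, \<lambda>i. \<gamma> i - \<beta> i) of (\<beta>, \<alpha>) \<Rightarrow> (ad \<beta> \<alpha>, \<beta>)) = a"
        using a e by simp
      show "(case a of (\<gamma>, \<beta>) \<Rightarrow> (\<beta>, \<lambda>i. \<gamma> i - \<beta> i)) \<in> {(\<beta>, \<alpha>). \<beta> \<in> A \<and> \<alpha> \<in> A \<and> ad \<beta> \<alpha> \<in> S}"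
        using a e unfolding A_def Le_def by (auto intro!: bexI[of _ \<gamma>])
      show "(case (case a of (\<gamma>, \<beta>) \<Rightarrow> (\<beta>, \<lambda>i. \<gamma> i - \<beta> i)) of (\<beta>, \<alpha>) \<Rightarrow> T y \<beta> \<alpha>) =
          (case a of (\<gamma>, \<beta>) \<Rightarrow> c \<gamma> * ((\<Prod>i\<in>UNIV. real (\<gamma> i choose \<beta> i)) * monom_eval \<beta> x * monom_eval (\<lambda>i. \<gamma> i - \<beta> i) y))"
        using a e unfolding T_def C_def by (simp add: mult_ac)
    next
      fix b assume "b \<in> {(\<beta>, \<alpha>). \<beta> \<in> A \<and> \<alpha> \<in> A \<and> ad \<beta> \<alpha> \<in> S}"
      then obtain \<beta> \<alpha> where b: "b = (\<beta>, \<alpha>)" "ad \<beta> \<alpha> \<in> S" by auto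
      have e: "(\<lambda>i. ad \<beta> \<alpha> i - \<beta> i) = \<alpha>" unfolding ad_def by auto
      show "(case case b of (\<beta>, \<alpha>) \<Rightarrow> (ad \<beta> \<alpha>, \<beta>) of (\<gamma>, \<beta>) \<Rightarrow> (\<beta>, \<lambda>i. \<gamma> i - \<beta> i)) = b"
        using b e by simp
      show "(case b of (\<beta>, \<alpha>) \<Rightarrow> (ad \<beta> \<alpha>, \<beta>)) \<in> Sigma S Le"
        using b unfolding Le_def ad_def by auto
    qed
    also have "\<dots> = (\<Sum>(\<beta>,\<alpha>)\<in>A \<times> A. T y \<beta> \<alpha>)"
      by (rule sum.mono_neutral_left) (auto simp: finA T_def S_def)
    also have "\<dots> = (\<Sum>\<beta>\<in>A. \<Sum>\<alpha>\<in>A. T y \<beta> \<alpha>)"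
      by (rule sum.cartesian_product[symmetric])
    finally show ?thesis by simp
  qed
  have "AE y in \<mu>. 0 \<le> (\<Sum>\<beta>\<in>A. \<Sum>\<alpha>\<in>A. T y \<beta> \<alpha>)"
    using support_ae[OF mu(1)]
  proof (rule AE_mp, intro AE_I2 impI)
    fix y assume "y \<in> measure_support \<mu>"
    then have "y \<in> sharp K" using mu(2) by blast
    then have "y + x \<in> K" using xK unfolding sharp_def by blast
    then have "x + y \<in> K" by (metis add.commute)
    then have "0 \<le> mpoly_eval c (x + y)" using nn by blast
    then show "0 \<le> (\<Sum>\<beta>\<in>A. \<Sum>\<alpha>\<in>A. T y \<beta> \<alpha>)" by (simp only: eq2)
  qed
  then show "0 \<le> mpoly_eval (Dop s c) x"
    unfolding eq1 by (rule integral_nonneg_AE)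
qed

end
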